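(* Let $\Gamma=\langle V,(w_u)_{u\in V},\alpha,\beta\rangle$ be a star celebrity game with $\beta>1$. If $T$ is a Nash equilibrium graph of $\Gamma$ that is a tree, then $\mathrm{diam}(T)\le\beta+1$.
   Context: A celebrity game $\Gamma=\langle V,(w_u)_{u\in V},\alpha,\beta\rangle$ consists of a set of players $V=\{1,\dots,n\}$, celebrity weights $w_u>0$, a link cost $\alpha>0$ and a critical distance $\beta$ with $1\le\beta\le n-1$. A strategy of player $u$ is a set $S_u\subseteq V\setminus\{u\}$; a strategy profile is $S=(S_1,\dots,S_n)$; its outcome graph $G[S]$ is the undirected graph on $V$ with edge set $\{\{u,v\}: u\in S_v\text{ or }v\in S_u\}$. With $d_G$ the graph distance (infinite between different connected components), the cost of player $u$ is $c_u(S)=\alpha|S_u|+\sum_{v:\,d_{G[S]}(u,v)>\beta}w_v$. $S$ is a Nash equilibrium if no player can strictly decrease its cost by changing only its own strategy; a graph $G$ is a Nash equilibrium graph if $G=G[S]$ for some Nash equilibrium $S$. $\Gamma$ is a star celebrity game if it has a Nash equilibrium graph that is connected. $\mathrm{diam}(T)=\max_{u,v}d_T(u,v)$. *)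

theory Defs
  imports Complex_Main
begin

(* Players are V = {1..n}.  A graph on V is given by its edge set E :: nat set set,
   each edge being a 2-element set {u,v}. *)

definition players :: "nat \<Rightarrow> nat set" where
  "players n = {1..n}"

definition outcome :: "nat \<Rightarrow> (nat \<Rightarrow> nat set) \<Rightarrow> nat set set" where
  "outcome n S = {{u, v} | u v. u \<in> players n \<and> v \<in> players n \<and> (u \<in> S v \<or> v \<in> S u)}"

definition is_walk :: "nat set set \<Rightarrow> nat list \<Rightarrow> bool" where
  "is_walk E xs \<longleftrightarrow> xs \<noteq> [] \<and> (\<forall>i < length xs - 1. {xs ! i, xs ! (i+1)} \<in> E)"

(* d_G(u,v) \<le> k  (length of a walk = number of edges = length xs - 1) *)
definition dist_le :: "nat set set \<Rightarrow> nat \<Rightarrow> nat \<Rightarrow> nat \<Rightarrow> bool" where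
  "dist_le E u v k \<longleftrightarrow> (\<exists>xs. is_walk E xs \<and> hd xs = u \<and> last xs = v \<and> length xs \<le> k + 1)"

definition connected_graph :: "nat set \<Rightarrow> nat set set \<Rightarrow> bool" where
  "connected_graph V E \<longleftrightarrow> (\<forall>u\<in>V. \<forall>v\<in>V. \<exists>k. dist_le E u v k)"

definition has_cycle :: "nat set set \<Rightarrow> bool" where
  "has_cycle E \<longleftrightarrow> (\<exists>xs. length xs \<ge> 3 \<and> distinct xs \<and> is_walk E xs \<and> {last xs, hd xs} \<in> E)"

definition is_tree :: "nat set \<Rightarrow> nat set set \<Rightarrow> bool" where
  "is_tree V E \<longleftrightarrow> connected_graph V E \<and> \<not> has_cycle E"

definition diam_le :: "nat set \<Rightarrow> nat set set \<Rightarrow> nat \<Rightarrow> bool" where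
  "diam_le V E D \<longleftrightarrow> (\<forall>u\<in>V. \<forall>v\<in>V. dist_le E u v D)"

definition strategy_profile :: "nat \<Rightarrow> (nat \<Rightarrow> nat set) \<Rightarrow> bool" where
  "strategy_profile n S \<longleftrightarrow> (\<forall>u\<in>players n. S u \<subseteq> players n - {u})"

definition cost :: "nat \<Rightarrow> (nat \<Rightarrow> real) \<Rightarrow> real \<Rightarrow> nat \<Rightarrow> (nat \<Rightarrow> nat set) \<Rightarrow> nat \<Rightarrow> real" where
  "cost n w \<alpha> \<beta> S u = \<alpha> * real (card (S u))
     + (\<Sum>v\<in>{v \<in> players n. \<not> dist_le (outcome n S) u v \<beta>}. w v)"

definition nash_eq :: "nat \<Rightarrow> (nat \<Rightarrow> real) \<Rightarrow> real \<Rightarrow> nat \<Rightarrow> (nat \<Rightarrow> nat set) \<Rightarrow> bool" where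
  "nash_eq n w \<alpha> \<beta> S \<longleftrightarrow> strategy_profile n S \<and>
     (\<forall>u\<in>players n. \<forall>Su'. Su' \<subseteq> players n - {u} \<longrightarrow>
        cost n w \<alpha> \<beta> S u \<le> cost n w \<alpha> \<beta> (S(u := Su')) u)"

definition NE_graph :: "nat \<Rightarrow> (nat \<Rightarrow> real) \<Rightarrow> real \<Rightarrow> nat \<Rightarrow> nat set set \<Rightarrow> bool" where
  "NE_graph n w \<alpha> \<beta> E \<longleftrightarrow> (\<exists>S. nash_eq n w \<alpha> \<beta> S \<and> outcome n S = E)"

definition celebrity_game :: "nat \<Rightarrow> (nat \<Rightarrow> real) \<Rightarrow> real \<Rightarrow> nat \<Rightarrow> bool" where
  "celebrity_game n w \<alpha> \<beta> \<longleftrightarrow> (\<forall>u\<in>players n. w u > 0) \<and> \<alpha> > 0 \<and> 1 \<le> \<beta> \<and> \<beta> \<le> n - 1"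

definition star_celebrity_game :: "nat \<Rightarrow> (nat \<Rightarrow> real) \<Rightarrow> real \<Rightarrow> nat \<Rightarrow> bool" where
  "star_celebrity_game n w \<alpha> \<beta> \<longleftrightarrow> celebrity_game n w \<alpha> \<beta> \<and>
     (\<exists>E. NE_graph n w \<alpha> \<beta> E \<and> connected_graph (players n) E)"

end

theory Submission
  imports Defs
begin


fun wk :: "nat set set \<Rightarrow> nat list \<Rightarrow> bool" where
  "wk E [] = False"
| "wk E [x] = True"
| "wk E (x # y # xs) = ({x, y} \<in> E \<and> wk E (y # xs))"

lemma is_walk_wk: "is_walk E xs = wk E xs"
proof (induction E xs rule: wk.induct)
  case (3 E x y xs)
  have "is_walk E (x # y # xs) \<longleftrightarrow> {x,y} \<in> E \<and> is_walk E (y # xs)"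
    unfolding is_walk_def
    apply (auto simp: less_Suc_eq_0_disj)
    done
  then show ?case using 3 by simp
qed (auto simp: is_walk_def)

lemma wk_glue: "wk E (a @ [y]) \<Longrightarrow> wk E (y # c) \<Longrightarrow> wk E (a @ y # c)"
proof (induction a)
  case Nil then show ?case by simp
next
  case (Cons x a)
  then show ?case by (cases a) auto
qed

lemma wk_prefix: "wk E (a @ b) \<Longrightarrow> a \<noteq> [] \<Longrightarrow> wk E a"
proof (induction a)
  case Nil then show ?case by simp
next
  case (Cons x a)
  then show ?case by (cases a; cases b) auto
qed

lemma wk_suffix: "wk E (a @ b) \<Longrightarrow> b \<noteq> [] \<Longrightarrow> wk E b"
proof (induction a)
  case Nil then show ?case by simp
next
  case (Cons x a)
  then show ?case by (cases a; cases b) auto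
qed

lemma wk_nonempty: "wk E xs \<Longrightarrow> xs \<noteq> []"
  by (cases xs) auto

lemma wk_rev: "wk E xs \<Longrightarrow> wk E (rev xs)"
proof (induction E xs rule: wk.induct)
  case (3 E x y xs)
  then have "wk E (rev (y # xs))" by simp
  moreover have "rev (x # y # xs) = rev xs @ y # [x]" by simp
  ultimately show ?case using 3 wk_glue[of E "rev xs" y "[x]"]
    by (simp add: insert_commute)
qed auto

lemma wk_mono: "wk E xs \<Longrightarrow> (\<And>a b. {a,b} \<in> E \<Longrightarrow> a \<in> set xs \<Longrightarrow> b \<in> set xs \<Longrightarrow> {a,b} \<in> E') \<Longrightarrow> wk E' xs"
proof (induction E xs rule: wk.induct)
  case (3 E x y xs)
  then show ?case by auto
qed auto

lemma wk_reduce: "wk E xs \<Longrightarrow> \<exists>ys. wk E ys \<and> distinct ys \<and> hd ys = hd xs \<and> last ys = last xs \<and> set ys \<subseteq> set xs \<and> length ys \<le> length xs"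
proof (induction xs rule: length_induct)
  case (1 xs)
  show ?case
  proof (cases "distinct xs")
    case True then show ?thesis using 1 by blast
  next
    case False
    then obtain a y b c where xs: "xs = a @ [y] @ b @ [y] @ c"
      using not_distinct_decomp by blast
    have w1: "wk E (a @ [y])" using 1(2) wk_prefix[of E "a @ [y]" "b @ [y] @ c"] xs by simp
    have w2: "wk E (y # c)" using 1(2) wk_suffix[of E "a @ [y] @ b" "y # c"] xs by simp
    have w: "wk E (a @ y # c)" using wk_glue[OF w1 w2] .
    have "length (a @ y # c) < length xs" using xs by simp
    then obtain ys where ys: "wk E ys \<and> distinct ys \<and> hd ys = hd (a @ y # c) \<and> last ys = last (a @ y # c) \<and> set ys \<subseteq> set (a @ y # c) \<and> length ys \<le> length (a @ y # c)"
      using 1(1) w by blast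
    have "hd (a @ y # c) = hd xs" using xs by (cases a) auto
    moreover have "last (a @ y # c) = last xs" using xs by (cases c) auto
    moreover have "set (a @ y # c) \<subseteq> set xs" using xs by auto
    moreover have "length (a @ y # c) \<le> length xs" using xs by simp
    ultimately show ?thesis using ys by (metis order_trans)
  qed
qed

lemma dist_le_wk: "dist_le E u v k \<longleftrightarrow> (\<exists>xs. wk E xs \<and> hd xs = u \<and> last xs = v \<and> length xs \<le> k + 1)"
  by (simp add: dist_le_def is_walk_wk)

lemma dist_le_distinct: "dist_le E u v k \<Longrightarrow> \<exists>xs. wk E xs \<and> distinct xs \<and> hd xs = u \<and> last xs = v \<and> length xs \<le> k + 1"
  unfolding dist_le_wk using wk_reduce by (meson order_trans)

lemma dist_le_refl: "dist_le E u u k"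
  unfolding dist_le_wk by (rule exI[of _ "[u]"]) simp

lemma dist_le_mono: "dist_le E u v k \<Longrightarrow> k \<le> k' \<Longrightarrow> dist_le E u v k'"
  unfolding dist_le_wk by fastforce

lemma dist_le_sym: "dist_le E u v k \<Longrightarrow> dist_le E v u k"
  unfolding dist_le_wk
  by (metis hd_rev last_rev length_rev wk_rev wk_nonempty)

lemma dist_le_edge_Cons: "dist_le E v t k \<Longrightarrow> {u, v} \<in> E \<Longrightarrow> dist_le E u t (Suc k)"
proof -
  assume "dist_le E v t k" "{u,v} \<in> E"
  then obtain xs where xs: "wk E xs" "hd xs = v" "last xs = t" "length xs \<le> k + 1"
    unfolding dist_le_wk by blast
  then obtain ys where "xs = v # ys" by (cases xs) auto
  then have "wk E (u # xs)" using xs \<open>{u,v}\<in>E\<close> by simp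
  then show ?thesis unfolding dist_le_wk using xs
    by (intro exI[of _ "u # xs"]) (auto simp: wk_nonempty)
qed

lemma dist_le_edge_snoc: "dist_le E t v k \<Longrightarrow> {v, u} \<in> E \<Longrightarrow> dist_le E t u (Suc k)"
  by (metis dist_le_sym dist_le_edge_Cons insert_commute)



lemma leaf_not_in:
  assumes "wk E xs" "distinct xs" "\<forall>y. {u,y} \<in> E \<longrightarrow> y = nu" "hd xs \<noteq> u" "last xs \<noteq> u"
  shows "u \<notin> set xs"
proof
  assume "u \<in> set xs"
  then obtain i where i: "i < length xs" "xs ! i = u" by (metis in_set_conv_nth)
  have ne: "xs \<noteq> []" using i by auto
  have "i \<noteq> 0" using i assms(4) ne by (metis hd_conv_nth)
  moreover have "i \<noteq> length xs - 1" using i assms(5) ne by (metis last_conv_nth)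
  ultimately have i2: "0 < i" "i + 1 < length xs" using i by auto
  have w: "is_walk E xs" using assms(1) is_walk_wk by simp
  have e1: "{xs ! (i-1), xs ! i} \<in> E"
  proof -
    have "i - 1 < length xs - 1" using i2 by linarith
    then have "{xs ! (i-1), xs ! (i - 1 + 1)} \<in> E" using w unfolding is_walk_def by blast
    then show ?thesis using i2 by simp
  qed
  have e2: "{xs ! i, xs ! (i+1)} \<in> E" using w i2 unfolding is_walk_def by auto
  have "xs ! (i-1) = nu" using e1 i assms(3) by (simp add: insert_commute)
  moreover have "xs ! (i+1) = nu" using e2 i assms(3) by simp
  ultimately have "xs ! (i-1) = xs ! (i+1)" by simp
  then have "i - 1 = i + 1" using nth_eq_iff_index_eq[OF assms(2), of "i - 1" "i + 1"] i2 by simp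
  then show False using i2 by simp
qed

lemma leaf_exists:
  assumes nc: "\<not> has_cycle E"
    and EP: "\<forall>a b. {a,b} \<in> E \<longrightarrow> b \<in> P"
    and loop: "\<forall>a. {a} \<notin> E"
    and m: "dist_le E v u m" and mmin: "\<forall>j<m. \<not> dist_le E v u j"
    and mx: "\<forall>z\<in>P. dist_le E v z m" and uv: "u \<noteq> v"
  shows "\<exists>nu. {u,nu} \<in> E \<and> (\<forall>y. {u,y} \<in> E \<longrightarrow> y = nu)"
proof -
  obtain W where W: "wk E W" "distinct W" "hd W = v" "last W = u" "length W \<le> m + 1"
    using dist_le_distinct[OF m] by blast
  have Wne: "W \<noteq> []" using W wk_nonempty by blast
  define W' where "W' = butlast W"
  have WW: "W = W' @ [u]" using Wne W(4) unfolding W'_def by (metis append_butlast_last_id)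
  have W'ne: "W' \<noteq> []" using WW W(3) uv by auto
  define q where "q = last W'"
  have W'q: "W' = butlast W' @ [q]" using W'ne q_def by simp
  have "W = butlast W' @ [q, u]" using WW W'q by (metis append.assoc append_Cons append_Nil)
  then have "wk E [q,u]" using W(1) wk_suffix by (metis list.distinct(1))
  then have qu: "{q,u} \<in> E" by simp
  have uW': "u \<notin> set W'" using W(2) WW by simp
  have hW': "hd W' = v" using W(3) WW W'ne by simp
  have wW': "wk E W'" using W(1) WW W'ne wk_prefix by metis
  have "\<forall>y. {u,y} \<in> E \<longrightarrow> y = q"
  proof (intro allI impI, rule ccontr)
    fix y assume uy: "{u,y} \<in> E" and yq: "y \<noteq> q"
    have yu: "y \<noteq> u" using uy loop by auto
    have yP: "y \<in> P" using uy EP by blast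
    obtain Q where Q: "wk E Q" "distinct Q" "hd Q = v" "last Q = y" "length Q \<le> m + 1"
      using dist_le_distinct mx yP by blast
    have uQ: "u \<notin> set Q"
    proof
      assume "u \<in> set Q"
      then obtain i where i: "i < length Q" "Q ! i = u" by (metis in_set_conv_nth)
      have tk: "take (Suc i) Q = take i Q @ [u]" using i by (simp add: take_Suc_conv_app_nth)
      have "wk E (take (Suc i) Q @ drop (Suc i) Q)" using Q(1) by simp
      then have "wk E (take (Suc i) Q)" by (rule wk_prefix) (simp add: tk)
      moreover have "hd (take (Suc i) Q) = v" using Q(3) i by (cases Q) auto
      moreover have "last (take (Suc i) Q) = u" using tk by simp
      moreover have "length (take (Suc i) Q) \<le> i + 1" by simp
      ultimately have "dist_le E v u i" unfolding dist_le_wk by blast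
      then have "i \<ge> m" using mmin by (meson not_le)
      have "i \<noteq> length Q - 1" using i Q(4) yu by (metis last_conv_nth list.size(3) not_less_zero)
      then show False using \<open>i \<ge> m\<close> i Q(5) by linarith
    qed
    obtain a where a: "rev W' = a @ [v]" using hW' W'ne
      by (metis hd_Cons_tl rev.simps(2))
    obtain c where c: "Q = v # c" using Q(3) wk_nonempty[OF Q(1)] by (metis hd_Cons_tl)
    have wa: "wk E (a @ [v])" using wk_rev[OF wW'] a by simp
    have wc: "wk E (v # c)" using Q(1) c by simp
    have wZ: "wk E (a @ v # c)" using wk_glue[OF wa wc] .
    have hZ: "hd (a @ v # c) = q"
    proof -
      have "hd (rev W') = q" using q_def W'ne by (simp add: hd_rev)
      then show ?thesis using a by (cases a) auto
    qed
    have lZ: "last (a @ v # c) = y" using Q(4) c by simp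
    have sZ: "set (a @ v # c) \<subseteq> set W' \<union> set Q" using a c
      by (metis Un_upper1 Un_upper2 append_Cons append_Nil set_append set_rev sup.mono)
    obtain R where R: "wk E R" "distinct R" "hd R = q" "last R = y" "set R \<subseteq> set (a @ v # c)"
      using wk_reduce[OF wZ] hZ lZ by metis
    have uR: "u \<notin> set R" using R(5) sZ uW' uQ by blast
    obtain R' where R': "R = q # R'" using R(3) wk_nonempty[OF R(1)] by (metis hd_Cons_tl)
    have "R' \<noteq> []" using R' R(4) yq by auto
    have "has_cycle E"
      unfolding has_cycle_def
    proof (intro exI[of _ "u # R"] conjI)
      show "3 \<le> length (u # R)" using R' \<open>R' \<noteq> []\<close> by (cases R') auto
      show "distinct (u # R)" using R(2) uR by simp
      show "is_walk E (u # R)" unfolding is_walk_wk using R(1) R' qu by (simp add: insert_commute)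
      show "{last (u # R), hd (u # R)} \<in> E" using R(4) R' uy by (simp add: insert_commute)
    qed
    then show False using nc by simp
  qed
  then show ?thesis using qu by (metis insert_commute)
qed

lemma far_leaves:
  assumes conn: "connected_graph P E" and nc: "\<not> has_cycle E"
    and EP: "\<forall>a b. {a,b} \<in> E \<longrightarrow> b \<in> P" and loop: "\<forall>a. {a} \<notin> E"
    and fin: "finite P" and ab: "a \<in> P" "b \<in> P" "\<not> dist_le E a b k"
  shows "\<exists>u v nu nv. u \<in> P \<and> v \<in> P \<and> \<not> dist_le E u v k \<and> {u,nu} \<in> E \<and> (\<forall>y. {u,y} \<in> E \<longrightarrow> y = nu)
     \<and> {v,nv} \<in> E \<and> (\<forall>y. {v,y} \<in> E \<longrightarrow> y = nv)"
proof -
  define f where "f p = (LEAST j. dist_le E (fst p) (snd p) j)" for p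
  have fD: "dist_le E x y (f (x,y))" if "x \<in> P" "y \<in> P" for x y
  proof -
    have "\<exists>j. dist_le E x y j" using conn that unfolding connected_graph_def by blast
    then show ?thesis unfolding f_def by (simp add: LeastI_ex)
  qed
  have fle: "f (x,y) \<le> j" if "dist_le E x y j" for x y j
    unfolding f_def using that by (simp add: Least_le)
  have fsym: "f (x,y) = f (y,x)" if "x \<in> P" "y \<in> P" for x y
    using fle fD dist_le_sym that by (meson antisym)
  have finPP: "finite (P \<times> P)" using fin by simp
  have neP: "P \<times> P \<noteq> {}" using ab by auto
  obtain p where p: "p \<in> P \<times> P" "f p = Max (f ` (P \<times> P))"
    using Max_in[of "f ` (P \<times> P)"] finPP neP by (metis (no_types, lifting) finite_imageI image_iff image_is_empty)
  have pmax: "f q \<le> f p" if "q \<in> P \<times> P" for q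
    using p(2) finPP that by simp
  obtain u v where uv: "p = (u,v)" by (cases p)
  have uP: "u \<in> P" and vP: "v \<in> P" using p uv by auto
  have "k < f (a,b)"
  proof (rule ccontr)
    assume "\<not> k < f (a,b)"
    then have "dist_le E a b k" using fD[OF ab(1,2)] dist_le_mono by (meson not_less)
    then show False using ab by simp
  qed
  moreover have "f (a,b) \<le> f (u,v)" using pmax ab uv by auto
  ultimately have far: "\<not> dist_le E u v k" using fle by (meson leD order_less_le_trans)
  have uneqv: "u \<noteq> v" using far dist_le_refl by metis
  have l1: "\<exists>nu. {u,nu} \<in> E \<and> (\<forall>y. {u,y} \<in> E \<longrightarrow> y = nu)"
  proof (rule leaf_exists[OF nc EP loop, of v u "f (v,u)"])
    show "dist_le E v u (f (v, u))" using fD vP uP by simp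
    show "\<forall>j<f (v, u). \<not> dist_le E v u j" using fle by (meson leD)
    show "\<forall>z\<in>P. dist_le E v z (f (v, u))"
    proof
      fix z assume "z \<in> P"
      have "f (v,z) \<le> f (v,u)" using pmax[of "(v,z)"] fsym[OF uP vP] uv \<open>z\<in>P\<close> vP by simp
      then show "dist_le E v z (f (v,u))" using fD[OF vP \<open>z\<in>P\<close>] dist_le_mono by blast
    qed
    show "u \<noteq> v" by (rule uneqv)
  qed
  have l2: "\<exists>nv. {v,nv} \<in> E \<and> (\<forall>y. {v,y} \<in> E \<longrightarrow> y = nv)"
  proof (rule leaf_exists[OF nc EP loop, of u v "f (u,v)"])
    show "dist_le E u v (f (u, v))" using fD vP uP by simp
    show "\<forall>j<f (u, v). \<not> dist_le E u v j" using fle by (meson leD)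
    show "\<forall>z\<in>P. dist_le E u z (f (u, v))"
    proof
      fix z assume "z \<in> P"
      have "f (u,z) \<le> f (u,v)" using pmax[of "(u,z)"] uv \<open>z\<in>P\<close> uP by simp
      then show "dist_le E u z (f (u,v))" using fD[OF uP \<open>z\<in>P\<close>] dist_le_mono by blast
    qed
    show "v \<noteq> u" using uneqv by simp
  qed
  show ?thesis using l1 l2 uP vP far by blast
qed



lemma edge_outcome: "{x,y} \<in> outcome n S \<longleftrightarrow> x \<in> players n \<and> y \<in> players n \<and> (x \<in> S y \<or> y \<in> S x)"
  unfolding outcome_def by (auto simp: doubleton_eq_iff)

lemma dist_le_subset: "dist_le E u v k \<Longrightarrow> E \<subseteq> E' \<Longrightarrow> dist_le E' u v k"
proof -
  assume "dist_le E u v k" "E \<subseteq> E'"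
  then obtain xs where xs: "wk E xs" "hd xs = u" "last xs = v" "length xs \<le> k + 1"
    unfolding dist_le_wk by blast
  have "wk E' xs" using wk_mono[OF xs(1), of E'] \<open>E \<subseteq> E'\<close> by blast
  then show ?thesis unfolding dist_le_wk using xs by blast
qed

lemma sum_insert_le: "finite A \<Longrightarrow> (\<forall>x\<in>insert u A. (w::nat\<Rightarrow>real) x > 0) \<Longrightarrow> sum w (insert u A) \<le> sum w A + w u"
  by (cases "u \<in> A") (auto simp: insert_absorb)

lemma finite_players: "finite (players n)" by (simp add: players_def)

lemma case1:
  assumes NE: "nash_eq n w \<alpha> \<beta> S" and wpos: "\<forall>x\<in>players n. w x > 0" and b2: "\<beta> \<ge> 2"
    and uP: "u \<in> players n" and vP: "v \<in> players n"
    and far: "\<not> dist_le (outcome n S) u v (\<beta>+1)"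
    and leaf1: "{u,nu} \<in> outcome n S" and leaf2: "\<forall>y. {u,y} \<in> outcome n S \<longrightarrow> y = nu"
    and own: "u \<in> S nu"
  shows False
proof -
  define P where "P = players n"
  define G where "G = outcome n S"
  have finP: "finite P" unfolding P_def by (rule finite_players)
  have prof: "\<forall>x\<in>P. S x \<subseteq> P - {x}" using NE unfolding nash_eq_def strategy_profile_def P_def by blast
  have dev: "\<And>x Sx. x \<in> P \<Longrightarrow> Sx \<subseteq> P - {x} \<Longrightarrow> cost n w \<alpha> \<beta> S x \<le> cost n w \<alpha> \<beta> (S(x := Sx)) x"
    using NE unfolding nash_eq_def P_def by blast
  have nuP: "nu \<in> P" using leaf1 unfolding edge_outcome P_def by simp
  have nuu: "nu \<noteq> u" using prof nuP own by auto
  have wnn: "\<forall>x\<in>P. w x \<ge> 0" using wpos P_def by (simp add: less_imp_le)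
  define S1 where "S1 = S(nu := S nu - {u})"
  define far0 where "far0 = {t \<in> P. \<not> dist_le G nu t \<beta>}"
  define far1 where "far1 = {t \<in> P. \<not> dist_le (outcome n S1) nu t \<beta>}"
  have far1_sub: "far1 \<subseteq> insert u far0"
  proof
    fix t assume t: "t \<in> far1"
    show "t \<in> insert u far0"
    proof (rule ccontr)
      assume "t \<notin> insert u far0"
      then have tu: "t \<noteq> u" and d: "dist_le G nu t \<beta>" using t unfolding far0_def far1_def by auto
      obtain xs where xs: "wk G xs" "distinct xs" "hd xs = nu" "last xs = t" "length xs \<le> \<beta> + 1"
        using dist_le_distinct[OF d] by blast
      have uxs: "u \<notin> set xs" using leaf_not_in[OF xs(1,2)] leaf2 xs(3,4) nuu tu G_def by blast
      have "wk (outcome n S1) xs"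
      proof (rule wk_mono[OF xs(1)])
        fix a b assume ab: "{a,b} \<in> G" "a \<in> set xs" "b \<in> set xs"
        then have "a \<noteq> u" "b \<noteq> u" using uxs by auto
        then show "{a,b} \<in> outcome n S1" using ab(1) unfolding G_def edge_outcome S1_def by auto
      qed
      then have "dist_le (outcome n S1) nu t \<beta>" unfolding dist_le_wk using xs by blast
      then show False using t unfolding far1_def by simp
    qed
  qed
  have card1: "card (S nu - {u}) = card (S nu) - 1" using own by simp
  have cpos: "card (S nu) \<ge> 1"
  proof -
    have "finite (S nu)" using prof nuP finP by (meson finite_Diff finite_subset)
    then show ?thesis using own by (metis One_nat_def Suc_leI card_gt_0_iff empty_iff)
  qed
  have far0_sub: "far0 \<subseteq> P" unfolding far0_def by auto
  have "cost n w \<alpha> \<beta> S nu \<le> cost n w \<alpha> \<beta> S1 nu" unfolding S1_def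
    by (rule dev[OF nuP]) (use prof nuP in auto)
  then have ineqA: "\<alpha> * real (card (S nu)) + sum w far0 \<le> \<alpha> * real (card (S nu) - 1) + sum w far1"
    unfolding cost_def far0_def far1_def G_def P_def S1_def using card1 by simp
  have "sum w far1 \<le> sum w (insert u far0)"
    by (rule sum_mono2) (use finP far0_sub far1_sub uP wnn P_def in \<open>auto intro: finite_subset\<close>)
  also have "\<dots> \<le> sum w far0 + w u"
    by (rule sum_insert_le) (use finP far0_sub uP wpos P_def in \<open>auto intro: finite_subset\<close>)
  finally have "\<alpha> * real (card (S nu)) \<le> \<alpha> * real (card (S nu) - 1) + w u" using ineqA by simp
  then have aw: "\<alpha> \<le> w u" using cpos by (simp add: of_nat_diff algebra_simps)
  have uv1: "\<not> dist_le G u v 1" using far dist_le_mono G_def by (metis le_add2)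
  have uSv: "u \<notin> S v"
  proof
    assume "u \<in> S v"
    then have "{u,v} \<in> G" using uP vP G_def edge_outcome by blast
    then have "dist_le G u v 1" using dist_le_edge_Cons[OF dist_le_refl[of G v 0]] by simp
    then show False using uv1 by simp
  qed
  have vu: "v \<noteq> u" using far dist_le_refl by metis
  define S2 where "S2 = S(v := insert u (S v))"
  define farv where "farv = {t \<in> P. \<not> dist_le G v t \<beta>}"
  define far2 where "far2 = {t \<in> P. \<not> dist_le (outcome n S2) v t \<beta>}"
  have GG2: "G \<subseteq> outcome n S2"
  proof
    fix e assume "e \<in> G"
    then show "e \<in> outcome n S2" unfolding G_def outcome_def S2_def by auto
  qed
  have vu2: "{v,u} \<in> outcome n S2" unfolding edge_outcome S2_def using uP vP P_def by simp
  have d2u: "dist_le (outcome n S2) v u \<beta>"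
    using dist_le_edge_snoc[OF dist_le_refl vu2] dist_le_mono b2 by (metis One_nat_def Suc_1 Suc_leD)
  have d2nu: "dist_le (outcome n S2) v nu \<beta>"
  proof -
    have "{u,nu} \<in> outcome n S2" using leaf1 GG2 G_def by blast
    then have "dist_le (outcome n S2) v nu (Suc (Suc 0))"
      using dist_le_edge_snoc[OF dist_le_edge_snoc[OF dist_le_refl vu2]] by simp
    then show ?thesis by (rule dist_le_mono) (use b2 in simp)
  qed
  have far2_sub: "far2 \<subseteq> farv - {u, nu}"
  proof
    fix t assume t: "t \<in> far2"
    have "\<not> dist_le G v t \<beta>"
    proof
      assume "dist_le G v t \<beta>"
      then have "dist_le (outcome n S2) v t \<beta>" by (rule dist_le_subset[OF _ GG2])
      then show False using t unfolding far2_def by simp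
    qed
    moreover have "t \<noteq> u" "t \<noteq> nu" using t d2u d2nu unfolding far2_def by auto
    ultimately show "t \<in> farv - {u,nu}" using t unfolding farv_def far2_def by auto
  qed
  have u_farv: "u \<in> farv"
  proof -
    have "\<not> dist_le G v u \<beta>"
    proof
      assume "dist_le G v u \<beta>"
      then have "dist_le G u v \<beta>" by (rule dist_le_sym)
      then have "dist_le G u v (\<beta>+1)" by (rule dist_le_mono) simp
      then show False using far G_def by simp
    qed
    then show ?thesis using uP P_def farv_def by simp
  qed
  have nu_farv: "nu \<in> farv"
  proof -
    have "\<not> dist_le G v nu \<beta>"
    proof
      assume "dist_le G v nu \<beta>"
      then have "dist_le G v u (Suc \<beta>)" by (rule dist_le_edge_snoc) (use leaf1 in \<open>simp add: G_def insert_commute\<close>)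
      then have "dist_le G u v (Suc \<beta>)" by (rule dist_le_sym)
      then show False using far G_def by simp
    qed
    then show ?thesis using nuP farv_def by simp
  qed
  have farv_sub: "farv \<subseteq> P" unfolding farv_def by auto
  have finv: "finite farv" using finite_subset[OF farv_sub finP] .
  have "cost n w \<alpha> \<beta> S v \<le> cost n w \<alpha> \<beta> S2 v" unfolding S2_def
    by (rule dev) (use prof vP uP vu P_def in auto)
  then have ineqB: "\<alpha> * real (card (S v)) + sum w farv \<le> \<alpha> * real (card (insert u (S v))) + sum w far2"
    unfolding cost_def farv_def far2_def G_def P_def S2_def by simp
  have SvP: "S v \<subseteq> P" using prof vP P_def by blast
  have finSv: "finite (S v)" using finite_subset[OF SvP finP] .
  have cardB: "card (insert u (S v)) = card (S v) + 1" using uSv finSv by simp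
  have "sum w far2 \<le> sum w (farv - {u, nu})"
    by (rule sum_mono2) (use finv far2_sub farv_sub wnn in auto)
  also have "\<dots> = sum w farv - w u - w nu"
  proof -
    have "sum w (farv - {u,nu}) = sum w (farv - {u} - {nu})" by (simp add: Diff_insert2[symmetric] insert_commute)
    also have "\<dots> = sum w (farv - {u}) - w nu" using nu_farv nuu finv by (simp add: sum_diff1)
    also have "\<dots> = sum w farv - w u - w nu" using u_farv finv by (simp add: sum_diff1)
    finally show ?thesis .
  qed
  finally have "w u + w nu \<le> \<alpha>" using ineqB cardB by (simp add: algebra_simps)
  moreover have "w nu > 0" using wpos nuP P_def by simp
  ultimately show False using aw by simp
qed



lemma case3:
  assumes NE: "nash_eq n w \<alpha> \<beta> S" and wpos: "\<forall>x\<in>players n. w x > 0" and b2: "\<beta> \<ge> 2"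
    and uP: "u \<in> players n" and vP: "v \<in> players n"
    and far: "\<not> dist_le (outcome n S) u v (\<beta>+1)"
    and leaf1: "{u,nu} \<in> outcome n S" and leaf2: "\<forall>y. {u,y} \<in> outcome n S \<longrightarrow> y = nu"
    and vleaf1: "{v,nv} \<in> outcome n S"
    and Su: "S u = {nu}"
  shows "sum w (players n - {t. dist_le (outcome n S) nu t (\<beta>-1)})
       \<le> sum w (players n - {t. dist_le (outcome n S) nv t (\<beta>-1)}) - w u"
proof -
  define P where "P = players n"
  define G where "G = outcome n S"
  define B1 where "B1 = {t. dist_le G nu t (\<beta>-1)}"
  define B2 where "B2 = {t. dist_le G nv t (\<beta>-1)}"
  have finP: "finite P" unfolding P_def by (rule finite_players)
  have dev: "\<And>x Sx. x \<in> P \<Longrightarrow> Sx \<subseteq> P - {x} \<Longrightarrow> cost n w \<alpha> \<beta> S x \<le> cost n w \<alpha> \<beta> (S(x := Sx)) x"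
    using NE unfolding nash_eq_def P_def by blast
  have nvP: "nv \<in> P" using vleaf1 unfolding edge_outcome P_def by simp
  have nvu: "nv \<noteq> u"
  proof
    assume "nv = u"
    then have "{v,u} \<in> G" using vleaf1 G_def by simp
    then have "dist_le G v u (Suc 0)" by (rule dist_le_edge_snoc[OF dist_le_refl])
    then have "dist_le G u v (Suc 0)" by (rule dist_le_sym)
    then have "dist_le G u v (\<beta>+1)" by (rule dist_le_mono) simp
    then show False using far G_def by simp
  qed
  define S3 where "S3 = S(u := {nv})"
  define faru where "faru = {t \<in> P. \<not> dist_le G u t \<beta>}"
  define far3 where "far3 = {t \<in> P. \<not> dist_le (outcome n S3) u t \<beta>}"
  have "cost n w \<alpha> \<beta> S u \<le> cost n w \<alpha> \<beta> S3 u" unfolding S3_def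
    by (rule dev) (use uP nvP nvu P_def in auto)
  then have ineq: "sum w faru \<le> sum w far3"
    unfolding cost_def faru_def far3_def G_def P_def S3_def using Su by simp
  have sub1: "P - B1 \<subseteq> faru"
  proof
    fix t assume t: "t \<in> P - B1"
    show "t \<in> faru"
    proof (rule ccontr)
      assume "t \<notin> faru"
      then have d: "dist_le G u t \<beta>" using t faru_def by simp
      obtain xs where xs: "wk G xs" "distinct xs" "hd xs = u" "last xs = t" "length xs \<le> \<beta> + 1"
        using dist_le_distinct[OF d] by blast
      show False
      proof (cases xs)
        case Nil then show ?thesis using xs wk_nonempty by simp
      next
        case (Cons x ys)
        show ?thesis
        proof (cases ys)
          case Nil
          then have "t = u" using xs Cons by simp
          have "dist_le G nu u (Suc 0)" by (rule dist_le_edge_snoc[OF dist_le_refl]) (use leaf1 G_def in \<open>simp add: insert_commute\<close>)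
          then have "dist_le G nu u (\<beta>-1)" by (rule dist_le_mono) (use b2 in simp)
          then show False using t \<open>t = u\<close> B1_def by simp
        next
          case (Cons y zs)
          have "x = u" using xs \<open>xs = x # ys\<close> by simp
          then have "{u,y} \<in> G" using xs(1) \<open>xs = x # ys\<close> Cons by simp
          then have "y = nu" using leaf2 G_def by simp
          have "wk G (y # zs)" using xs(1) \<open>xs = x # ys\<close> Cons by simp
          moreover have "last (y # zs) = t" using xs(4) \<open>xs = x # ys\<close> Cons by simp
          moreover have "length (y # zs) \<le> (\<beta> - 1) + 1" using xs(5) \<open>xs = x # ys\<close> Cons b2 by simp
          ultimately have "dist_le G nu t (\<beta>-1)" unfolding dist_le_wk using \<open>y = nu\<close>
            by (intro exI[of _ "y # zs"]) simp
          then show False using t B1_def by simp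
        qed
      qed
    qed
  qed
  have sub3: "far3 \<subseteq> P - B2 - {u}"
  proof
    fix t assume t: "t \<in> far3"
    have tu: "t \<noteq> u" using t dist_le_refl unfolding far3_def by blast
    have "t \<notin> B2"
    proof
      assume "t \<in> B2"
      then have d: "dist_le G nv t (\<beta>-1)" using B2_def by simp
      obtain xs where xs: "wk G xs" "distinct xs" "hd xs = nv" "last xs = t" "length xs \<le> \<beta> - 1 + 1"
        using dist_le_distinct[OF d] by blast
      have uxs: "u \<notin> set xs" using leaf_not_in[OF xs(1,2)] leaf2 xs(3,4) nvu tu G_def by blast
      have "wk (outcome n S3) xs"
      proof (rule wk_mono[OF xs(1)])
        fix a b assume ab: "{a,b} \<in> G" "a \<in> set xs" "b \<in> set xs"
        then have "a \<noteq> u" "b \<noteq> u" using uxs by auto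
        then show "{a,b} \<in> outcome n S3" using ab(1) unfolding G_def edge_outcome S3_def by auto
      qed
      then have "dist_le (outcome n S3) nv t (\<beta>-1)" unfolding dist_le_wk using xs by blast
      moreover have "{u,nv} \<in> outcome n S3" unfolding edge_outcome S3_def using uP nvP P_def by simp
      ultimately have "dist_le (outcome n S3) u t (Suc (\<beta>-1))" by (rule dist_le_edge_Cons)
      then have "dist_le (outcome n S3) u t \<beta>" using b2 by simp
      then show False using t far3_def by simp
    qed
    then show "t \<in> P - B2 - {u}" using t tu far3_def by simp
  qed
  have uB2: "u \<in> P - B2"
  proof -
    have "\<not> dist_le G nv u (\<beta>-1)"
    proof
      assume "dist_le G nv u (\<beta>-1)"
      then have "dist_le G v u (Suc (\<beta>-1))" by (rule dist_le_edge_Cons) (use vleaf1 G_def in simp)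
      then have "dist_le G u v (Suc (\<beta>-1))" by (rule dist_le_sym)
      then have "dist_le G u v (\<beta>+1)" by (rule dist_le_mono) simp
      then show False using far G_def by simp
    qed
    then show ?thesis using uP P_def B2_def by simp
  qed
  have wnn: "\<forall>x\<in>P. w x \<ge> 0" using wpos P_def by (simp add: less_imp_le)
  have finB: "finite (P - B2)" using finP by simp
  have "sum w (P - B1) \<le> sum w faru"
    by (rule sum_mono2) (use finP sub1 wnn in \<open>auto simp: faru_def\<close>)
  also have "\<dots> \<le> sum w far3" by (rule ineq)
  also have "\<dots> \<le> sum w (P - B2 - {u})"
    by (rule sum_mono2) (use finP sub3 wnn in auto)
  also have "\<dots> = sum w (P - B2) - w u" using uB2 finB by (simp add: sum_diff1)
  finally show ?thesis unfolding P_def B1_def B2_def G_def .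
qed



theorem proposition9:
  fixes n :: nat and w :: "nat \<Rightarrow> real" and \<alpha> :: real and \<beta> :: nat and T :: "nat set set"
  assumes "star_celebrity_game n w \<alpha> \<beta>"
    and "\<beta> > 1"
    and "NE_graph n w \<alpha> \<beta> T"
    and "is_tree (players n) T"
  shows "diam_le (players n) T (\<beta> + 1)"
proof (rule ccontr)
  assume nd: "\<not> diam_le (players n) T (\<beta> + 1)"
  have wpos: "\<forall>x\<in>players n. w x > 0" using assms(1) unfolding star_celebrity_game_def celebrity_game_def by blast
  have b2: "\<beta> \<ge> 2" using assms(2) by simp
  obtain S where NE: "nash_eq n w \<alpha> \<beta> S" and TS: "outcome n S = T"
    using assms(3) unfolding NE_graph_def by blast
  have prof: "\<forall>x\<in>players n. S x \<subseteq> players n - {x}" using NE unfolding nash_eq_def strategy_profile_def by blast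
  have conn: "connected_graph (players n) T" and nc: "\<not> has_cycle T" using assms(4) unfolding is_tree_def by auto
  obtain a b where ab: "a \<in> players n" "b \<in> players n" "\<not> dist_le T a b (\<beta>+1)"
    using nd unfolding diam_le_def by blast
  have EP: "\<forall>a b. {a,b} \<in> T \<longrightarrow> b \<in> players n" unfolding TS[symmetric] edge_outcome by simp
  have loop: "\<forall>a. {a} \<notin> T"
  proof (intro allI notI)
    fix a assume "{a} \<in> T"
    then have "{a,a} \<in> outcome n S" using TS by simp
    then have "a \<in> players n" "a \<in> S a" unfolding edge_outcome by auto
    then show False using prof by blast
  qed
  obtain u v nu nv where uv: "u \<in> players n" "v \<in> players n" "\<not> dist_le T u v (\<beta>+1)"
    "{u,nu} \<in> T" "\<forall>y. {u,y} \<in> T \<longrightarrow> y = nu" "{v,nv} \<in> T" "\<forall>y. {v,y} \<in> T \<longrightarrow> y = nv"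
    using far_leaves[OF conn nc EP loop finite_players ab] by blast
  have farvu: "\<not> dist_le T v u (\<beta>+1)" using uv(3) dist_le_sym by blast
  note uvS = uv[unfolded TS[symmetric]]
  note farvuS = farvu[unfolded TS[symmetric]]
  show False
  proof (cases "u \<in> S nu")
    case True
    show False by (rule case1[OF NE wpos b2 uvS(1,2,3,4,5) True])
  next
    case F1: False
    show False
    proof (cases "v \<in> S nv")
      case True
      show False by (rule case1[OF NE wpos b2 uvS(2,1) farvuS uvS(6,7) True])
    next
      case F2: False
      have "nu \<in> S u" using uvS(4) F1 unfolding edge_outcome by simp
      moreover have "\<forall>y\<in>S u. y = nu"
      proof
        fix y assume "y \<in> S u"
        then have "{u,y} \<in> outcome n S" using prof uv(1) unfolding edge_outcome by auto
        then show "y = nu" using uvS(5) by simp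
      qed
      ultimately have Su: "S u = {nu}" by blast
      have "nv \<in> S v" using uvS(6) F2 unfolding edge_outcome by simp
      moreover have "\<forall>y\<in>S v. y = nv"
      proof
        fix y assume "y \<in> S v"
        then have "{v,y} \<in> outcome n S" using prof uv(2) unfolding edge_outcome by auto
        then show "y = nv" using uvS(7) by simp
      qed
      ultimately have Sv: "S v = {nv}" by blast
      note i1 = case3[OF NE wpos b2 uvS(1,2,3,4,5,6) Su]
      note i2 = case3[OF NE wpos b2 uvS(2,1) farvuS uvS(6,7,4) Sv]
      have "w u > 0" "w v > 0" using wpos uv(1,2) by auto
      then show False using i1 i2 by linarith
    qed
  qed
qed


end
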